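(* Let $\mathcal{P}$ be a van Kampen diagram on a surface $\Sigma$ and let $P\in\mathcal{P}$ be a disk with vertex set $V_P$. Then $$-\kappa(P)\geq\frac{\beta(P)-6}{6}.$$
   Context: A van Kampen diagram on a compact surface $\Sigma$ over a presentation $\langle\mathcal{S}\mid\mathcal{R}\rangle$ is a decomposition of $\Sigma$ into finitely many labelled polygons ("disks") whose boundaries read reduced elements of $\mathcal{R}^{\pm}$, with compatible labels on shared edges; by concatenating edges one assumes every vertex has degree at least $3$. For a disk $P$ with vertices $V_P$ and edges $E_P$: $\deg(v)$ is the number of edges adjacent to $v$, $\deg'(v)$ the number of disks adjacent to $v$, $\epsilon(e)\in\{1,2\}$ the number of disks adjacent to $e$; $\kappa(P)=\sum_{v\in V_P}\frac{1}{\deg'(v)}-\sum_{e\in E_P}\frac{1}{\epsilon(e)}+1$; $\beta(v)=1$ if $\deg(v)\geq3$ and $0$ otherwise; $\beta(P)=\sum_{v\in V_P}\beta(v)$. *)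

theory Defs
  imports Main Complex_Main
begin

text \<open>
Combinatorial model of a polygonal decomposition of a compact surface.
Disks are indexed by a finite set F; disk f is a polygon with n f \<ge> 1 sides.
Side (f,i), i < n f, runs from corner (f,i) to corner (f, Suc i mod n f).
The partial map glue pairs sides: glue s = Some (t, r) means that side s is
glued to side t (t \<noteq> s), with r = True iff the two boundary readings traverse
the common edge in opposite directions.  Unglued sides lie on the boundary of
the surface.  Vertices are classes of corners under the identifications
induced by the gluing (the quotient is always a compact surface, possibly with
boundary).  Words over the generators are lists of (generator, exponent sign).
\<close>

type_synonym ('a) word = "('a \<times> bool) list"

definition sides :: "'f set \<Rightarrow> ('f \<Rightarrow> nat) \<Rightarrow> ('f \<times> nat) set" where
  "sides F n = {(f, i). f \<in> F \<and> i < n f}"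

definition nxt :: "('f \<Rightarrow> nat) \<Rightarrow> 'f \<times> nat \<Rightarrow> 'f \<times> nat" where
  "nxt n s = (fst s, Suc (snd s) mod n (fst s))"

definition corner_rel ::
  "('f \<Rightarrow> nat) \<Rightarrow> ('f \<times> nat \<Rightarrow> (('f \<times> nat) \<times> bool) option)
   \<Rightarrow> 'f \<times> nat \<Rightarrow> 'f \<times> nat \<Rightarrow> bool" where
  "corner_rel n glue c d \<longleftrightarrow>
     (\<exists>s t r. glue s = Some (t, r) \<and>
        (if r then (c = s \<and> d = nxt n t) \<or> (c = nxt n s \<and> d = t)
              else (c = s \<and> d = t) \<or> (c = nxt n s \<and> d = nxt n t)))"

definition vertex_of ::
  "('f \<Rightarrow> nat) \<Rightarrow> ('f \<times> nat \<Rightarrow> (('f \<times> nat) \<times> bool) option)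
   \<Rightarrow> 'f \<times> nat \<Rightarrow> ('f \<times> nat) set" where
  "vertex_of n glue c = {d. (\<lambda>x y. corner_rel n glue x y \<or> corner_rel n glue y x)\<^sup>*\<^sup>* c d}"

text \<open>deg' of the vertex at corner c: number of disks adjacent to it (counted
  with multiplicity, i.e. number of corners at that vertex).\<close>
definition degp ::
  "('f \<Rightarrow> nat) \<Rightarrow> ('f \<times> nat \<Rightarrow> (('f \<times> nat) \<times> bool) option) \<Rightarrow> 'f \<times> nat \<Rightarrow> nat" where
  "degp n glue c = card (vertex_of n glue c)"

text \<open>Side ends: (s, False) is the start of side s, (s, True) its end.\<close>
definition end_corner :: "('f \<Rightarrow> nat) \<Rightarrow> ('f \<times> nat) \<times> bool \<Rightarrow> 'f \<times> nat" where
  "end_corner n se = (if snd se then nxt n (fst se) else fst se)"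

definition end_partner ::
  "('f \<times> nat \<Rightarrow> (('f \<times> nat) \<times> bool) option) \<Rightarrow> ('f \<times> nat) \<times> bool \<Rightarrow> ('f \<times> nat) \<times> bool" where
  "end_partner glue se = (case glue (fst se) of None \<Rightarrow> se
      | Some (t, r) \<Rightarrow> (t, if r then \<not> snd se else snd se))"

text \<open>An edge end is a side end up to the gluing identification.\<close>
definition edge_end ::
  "('f \<times> nat \<Rightarrow> (('f \<times> nat) \<times> bool) option) \<Rightarrow> ('f \<times> nat) \<times> bool \<Rightarrow> (('f \<times> nat) \<times> bool) set" where
  "edge_end glue se = {se, end_partner glue se}"

text \<open>deg of the vertex at corner c: number of edge ends at that vertex
  (a loop at v counts twice).\<close>
definition deg ::
  "'f set \<Rightarrow> ('f \<Rightarrow> nat) \<Rightarrow> ('f \<times> nat \<Rightarrow> (('f \<times> nat) \<times> bool) option) \<Rightarrow> 'f \<times> nat \<Rightarrow> nat" where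
  "deg F n glue c = card (edge_end glue `
      {se. fst se \<in> sides F n \<and> end_corner n se \<in> vertex_of n glue c})"

text \<open>epsilon(e): number of disks adjacent to the edge containing side s.\<close>
definition eps :: "('f \<times> nat \<Rightarrow> (('f \<times> nat) \<times> bool) option) \<Rightarrow> 'f \<times> nat \<Rightarrow> nat" where
  "eps glue s = (if glue s = None then 1 else 2)"

definition kappa ::
  "('f \<Rightarrow> nat) \<Rightarrow> ('f \<times> nat \<Rightarrow> (('f \<times> nat) \<times> bool) option) \<Rightarrow> 'f \<Rightarrow> real" where
  "kappa n glue P = (\<Sum>i<n P. 1 / real (degp n glue (P, i)))
                   - (\<Sum>i<n P. 1 / real (eps glue (P, i))) + 1"

definition beta_v ::
  "'f set \<Rightarrow> ('f \<Rightarrow> nat) \<Rightarrow> ('f \<times> nat \<Rightarrow> (('f \<times> nat) \<times> bool) option) \<Rightarrow> 'f \<times> nat \<Rightarrow> nat" where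
  "beta_v F n glue c = (if deg F n glue c \<ge> 3 then 1 else 0)"

definition beta ::
  "'f set \<Rightarrow> ('f \<Rightarrow> nat) \<Rightarrow> ('f \<times> nat \<Rightarrow> (('f \<times> nat) \<times> bool) option) \<Rightarrow> 'f \<Rightarrow> nat" where
  "beta F n glue P = (\<Sum>i<n P. beta_v F n glue (P, i))"

definition word_inv :: "'a word \<Rightarrow> 'a word" where
  "word_inv w = rev (map (\<lambda>(a, b). (a, \<not> b)) w)"

definition reduced :: "'a word \<Rightarrow> bool" where
  "reduced w \<longleftrightarrow> (\<forall>i. Suc i < length w \<longrightarrow>
      \<not> (fst (w ! i) = fst (w ! Suc i) \<and> snd (w ! i) \<noteq> snd (w ! Suc i)))"

definition boundary_word ::
  "('f \<Rightarrow> nat) \<Rightarrow> ('f \<times> nat \<Rightarrow> 'a word) \<Rightarrow> 'f \<Rightarrow> 'a word" where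
  "boundary_word n lab f = concat (map (\<lambda>i. lab (f, i)) [0..<n f])"

text \<open>Van Kampen diagram on a compact surface over the presentation \<langle>S | R\<rangle>,
  with the standing assumption that every vertex has degree at least 3.\<close>
definition vk_diagram ::
  "'a set \<Rightarrow> 'a word set \<Rightarrow> 'f set \<Rightarrow> ('f \<Rightarrow> nat)
   \<Rightarrow> ('f \<times> nat \<Rightarrow> (('f \<times> nat) \<times> bool) option) \<Rightarrow> ('f \<times> nat \<Rightarrow> 'a word) \<Rightarrow> bool" where
  "vk_diagram S R F n glue lab \<longleftrightarrow>
     R \<subseteq> lists (S \<times> UNIV) \<and>
     finite F \<and> (\<forall>f\<in>F. 1 \<le> n f) \<and>
     (\<forall>s t r. glue s = Some (t, r) \<longrightarrow>
        s \<in> sides F n \<and> t \<in> sides F n \<and> t \<noteq> s \<and> glue t = Some (s, r)) \<and>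
     (\<forall>s\<in>sides F n. lab s \<noteq> [] \<and> lab s \<in> lists (S \<times> UNIV)) \<and>
     (\<forall>s t r. glue s = Some (t, r) \<longrightarrow> lab t = (if r then word_inv (lab s) else lab s)) \<and>
     (\<forall>f\<in>F. \<exists>k. reduced (rotate k (boundary_word n lab f)) \<and>
                 rotate k (boundary_word n lab f) \<in> R \<union> word_inv ` R) \<and>
     (\<forall>c\<in>sides F n. 3 \<le> deg F n glue c)"

end

theory Submission
  imports Defs
begin

definition prv :: "('f \<Rightarrow> nat) \<Rightarrow> 'f \<times> nat \<Rightarrow> 'f \<times> nat" where
  "prv n s = (fst s, (snd s + n (fst s) - 1) mod n (fst s))"

lemma nxt_prv: "s \<in> sides F n \<Longrightarrow> nxt n (prv n s) = s"
proof -
  assume "s \<in> sides F n"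
  then obtain f i where s: "s = (f, i)" "i < n f" by (auto simp: sides_def)
  have "Suc ((i + n f - 1) mod n f) mod n f = Suc (i + n f - 1) mod n f"
    by (simp add: mod_Suc_eq)
  also have "Suc (i + n f - 1) = i + n f" using s by simp
  finally show ?thesis using s by (simp add: nxt_def prv_def)
qed

lemma prv_nxt: "s \<in> sides F n \<Longrightarrow> prv n (nxt n s) = s"
proof -
  assume "s \<in> sides F n"
  then obtain f i where s: "s = (f, i)" "i < n f" by (auto simp: sides_def)
  show ?thesis
  proof (cases "Suc i < n f")
    case True
    then show ?thesis using s by (simp add: nxt_def prv_def)
  next
    case False
    then have "Suc i = n f" using s by simp
    then show ?thesis using s by (simp add: nxt_def prv_def)
  qed
qed

lemma end_corner_cases:
  "fst x \<in> sides F n \<Longrightarrow> end_corner n x = y \<Longrightarrow> x = (y, False) \<or> x = (prv n y, True)"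
  by (cases x; cases "snd x") (auto simp: end_corner_def prv_nxt)

lemma rel_to:
  assumes "corner_rel n glue y z"
    and gs: "\<And>s t r. glue s = Some (t, r) \<Longrightarrow> s \<in> sides F n"
  shows "\<exists>x. fst x \<in> sides F n \<and> glue (fst x) \<noteq> None \<and> end_corner n x = y
           \<and> end_corner n (end_partner glue x) = z"
proof -
  obtain s t r where g: "glue s = Some (t, r)" and
    c: "if r then (y = s \<and> z = nxt n t) \<or> (y = nxt n s \<and> z = t)
              else (y = s \<and> z = t) \<or> (y = nxt n s \<and> z = nxt n t)"
    using assms(1) unfolding corner_rel_def by blast
  have s: "s \<in> sides F n" using gs g by blast
  show ?thesis
  proof (cases "y = (if r then s else s) \<and> z = (if r then nxt n t else t)")
    case True
    then show ?thesis using g s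
      by (intro exI[of _ "(s, False)"]) (auto simp: end_corner_def end_partner_def)
  next
    case False
    then have "y = nxt n s \<and> z = (if r then t else nxt n t)" using c by (auto split: if_splits)
    then show ?thesis using g s
      by (intro exI[of _ "(s, True)"]) (auto simp: end_corner_def end_partner_def)
  qed
qed

lemma rel_from:
  assumes "glue (fst x) = Some (t, r)"
  shows "corner_rel n glue (end_corner n x) (end_corner n (end_partner glue x))"
  using assms unfolding corner_rel_def end_corner_def end_partner_def
  apply (cases x)
  apply (rule exI[of _ "fst x"], rule exI[of _ t], rule exI[of _ r])
  apply auto
  done

lemma card2: "card {a, b} \<le> 2"
  by (cases "a = b") auto

lemma corner_card:
  assumes vk: "vk_diagram S R F n glue lab" and c: "c \<in> sides F n"
  shows "card (vertex_of n glue c) \<noteq> 1"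
    and "card (vertex_of n glue c) = 2 \<Longrightarrow> glue c = None \<or> glue (prv n c) = None"
proof -
  have gsym: "\<And>s t r. glue s = Some (t, r) \<Longrightarrow>
        s \<in> sides F n \<and> t \<in> sides F n \<and> t \<noteq> s \<and> glue t = Some (s, r)"
    using vk unfolding vk_diagram_def by blast
  have d3: "3 \<le> deg F n glue c" using vk c unfolding vk_diagram_def by blast
  define V where "V = vertex_of n glue c"
  define SE where "SE = {se. fst se \<in> sides F n \<and> end_corner n se \<in> V}"
  define E where "E = edge_end glue"
  define ep where "ep = end_partner glue"
  have degE: "deg F n glue c = card (E ` SE)"
    unfolding deg_def E_def SE_def V_def by simp
  have cV: "c \<in> V" unfolding V_def vertex_of_def by simp
  have Vcl: "z \<in> V" if "y \<in> V" "corner_rel n glue y z" for y z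
    using that unfolding V_def vertex_of_def
    by (auto intro: rtranclp.rtrancl_into_rtrancl)
  have SEsub: "SE \<subseteq> (\<Union>y\<in>V. {(y, False), (prv n y, True)})"
  proof
    fix x assume "x \<in> SE"
    then have "fst x \<in> sides F n" "end_corner n x \<in> V" by (auto simp: SE_def)
    then show "x \<in> (\<Union>y\<in>V. {(y, False), (prv n y, True)})"
      using end_corner_cases[of x F n "end_corner n x"] by blast
  qed
  have epinv: "ep (ep x) = x" "ep x \<noteq> x" "fst (ep x) \<in> sides F n"
    if gx: "glue (fst x) \<noteq> None" for x
  proof -
    obtain t r where g: "glue (fst x) = Some (t, r)" using gx by (cases "glue (fst x)") auto
    have g2: "glue t = Some (fst x, r)" "t \<noteq> fst x" "t \<in> sides F n" using gsym[OF g] by auto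
    have e1: "ep x = (t, if r then \<not> snd x else snd x)"
      using g by (simp add: ep_def end_partner_def)
    have e2: "ep (ep x) = (fst x, if r then \<not> (if r then \<not> snd x else snd x) else (if r then \<not> snd x else snd x))"
      using g2(1) e1 by (simp add: ep_def end_partner_def)
    show "ep (ep x) = x" using e2 by (cases x) simp
    show "ep x \<noteq> x" using e1 g2(2) by (cases x) auto
    show "fst (ep x) \<in> sides F n" using e1 g2(3) by simp
  qed
  have epSE: "ep x \<in> SE" if "x \<in> SE" and gx: "glue (fst x) \<noteq> None" for x
  proof -
    obtain t r where g: "glue (fst x) = Some (t, r)" using gx by (cases "glue (fst x)") auto
    have "corner_rel n glue (end_corner n x) (end_corner n (ep x))"
      using rel_from[of glue x t r n, OF g] by (simp add: ep_def)
    moreover have "end_corner n x \<in> V" using that by (simp add: SE_def)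
    ultimately have "end_corner n (ep x) \<in> V" using Vcl by blast
    then show ?thesis using epinv(3)[OF that(2)] by (auto simp: SE_def)
  qed
  have Eep: "E (ep x) = E x" if "glue (fst x) \<noteq> None" for x
  proof -
    have "E y = {y, ep y}" for y by (simp add: E_def edge_end_def ep_def)
    then show ?thesis using epinv(1)[OF that] by (simp add: insert_commute)
  qed
  have x1SE: "(c, False) \<in> SE" using c cV by (simp add: SE_def end_corner_def)
  have prvc: "prv n c \<in> sides F n"
    using c by (auto simp: sides_def prv_def)
  have x2SE: "(prv n c, True) \<in> SE" using c cV prvc by (simp add: SE_def end_corner_def nxt_prv)
  show "card V \<noteq> 1" unfolding V_def[symmetric]
  proof
    assume "card V = 1"
    then have V: "V = {c}" using cV by (metis card_1_singletonE singletonD)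
    have SE2: "SE \<subseteq> {(c, False), (prv n c, True)}" using SEsub V by auto
    then have "card SE \<le> card {(c, False), (prv n c, True)}" by (intro card_mono) auto
    also have "\<dots> \<le> 2" by (rule card2)
    finally have "card SE \<le> 2" .
    moreover have "finite SE" using SE2 finite_subset by blast
    ultimately have "card (E ` SE) \<le> 2" using card_image_le le_trans by blast
    then show False using d3 degE by simp
  qed
  show "glue c = None \<or> glue (prv n c) = None" if V2': "card (vertex_of n glue c) = 2"
  proof (rule ccontr)
    assume "\<not> (glue c = None \<or> glue (prv n c) = None)"
    then have g1: "glue (fst (c, False)) \<noteq> None" and g2: "glue (fst (prv n c, True)) \<noteq> None"
      by auto
    have V2: "card V = 2" using V2' V_def by simp
    then obtain c' where V: "V = {c, c'}" "c' \<noteq> c" using cV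
      by (metis card_2_iff insert_commute insertE singletonD)
    define x1 where "x1 = (c, False)"
    define x2 where "x2 = (prv n c, True)"
    define x3 where "x3 = (c', False)"
    define x4 where "x4 = (prv n c', True)"
    have SE4: "SE \<subseteq> {x1, x2, x3, x4}" using SEsub V by (auto simp: x1_def x2_def x3_def x4_def)
    have finSE: "finite SE" using SE4 finite_subset by blast
    have p1: "ep x1 \<in> SE" using epSE x1SE g1 x1_def by blast
    have p2: "ep x2 \<in> SE" using epSE x2SE g2 x2_def by blast
    have x12: "x1 \<noteq> x2" by (simp add: x1_def x2_def)
    have fold_false: False if f: "ep x1 = x2"
    proof -
      have f2: "ep x2 = x1" using f epinv(1)[OF g1] x1_def by metis
      have ec1: "end_corner n x1 = c" by (simp add: x1_def end_corner_def)
      have ec2: "end_corner n x2 = c" using c by (simp add: x2_def end_corner_def nxt_prv)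
      have step: "z = c" if "corner_rel n glue c z \<or> corner_rel n glue z c" for z
        using that
      proof
        assume "corner_rel n glue c z"
        then obtain x where x: "fst x \<in> sides F n" "glue (fst x) \<noteq> None" "end_corner n x = c"
          "end_corner n (ep x) = z"
          using rel_to[of n glue c z] gsym unfolding ep_def by blast
        then have "x = x1 \<or> x = x2" using end_corner_cases x1_def x2_def by blast
        then show "z = c" using x f f2 ec1 ec2 by auto
      next
        assume "corner_rel n glue z c"
        then obtain x where x: "fst x \<in> sides F n" "glue (fst x) \<noteq> None" "end_corner n x = z"
          "end_corner n (ep x) = c"
          using rel_to[of n glue z c] gsym unfolding ep_def by blast
        then have "ep x = x1 \<or> ep x = x2" using end_corner_cases epinv(3)[OF x(2)] x1_def x2_def
          by blast
        then have "x = x2 \<or> x = x1" using epinv(1)[OF x(2)] f f2 by metis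
        then show "z = c" using x ec1 ec2 by auto
      qed
      have "d = c" if "d \<in> V" for d
      proof -
        have "(\<lambda>x y. corner_rel n glue x y \<or> corner_rel n glue y x)\<^sup>*\<^sup>* c d"
          using that by (simp add: V_def vertex_of_def)
        then show ?thesis
          by (induction rule: rtranclp_induct) (use step in auto)
      qed
      then show False using V by auto
    qed
    have nf1: "ep x1 \<noteq> x2" using fold_false by blast
    have nf2: "ep x2 \<noteq> x1" using fold_false epinv(1)[OF g2] x2_def by metis
    have n11: "ep x1 \<noteq> x1" using epinv(2)[OF g1] x1_def by simp
    have n22: "ep x2 \<noteq> x2" using epinv(2)[OF g2] x2_def by simp
    have p12: "ep x1 \<noteq> ep x2" using epinv(1)[OF g1] epinv(1)[OF g2] x12 x1_def x2_def by metis
    have in34: "ep x1 \<in> {x3, x4}" "ep x2 \<in> {x3, x4}" using SE4 p1 p2 nf1 nf2 n11 n22 by auto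
    have SE': "SE \<subseteq> {x1, x2, ep x1, ep x2}" using SE4 in34 p12 by auto
    have "E ` SE \<subseteq> {E x1, E x2}"
      using SE' Eep[of x1] Eep[of x2] g1 g2 x1_def x2_def by auto
    then have "card (E ` SE) \<le> card {E x1, E x2}" by (intro card_mono) auto
    also have "\<dots> \<le> 2" by (rule card2)
    finally show False using d3 degE by simp
  qed
qed


lemma sum_shift_prev:
  assumes "1 \<le> (m::nat)"
  shows "(\<Sum>i<m. f ((i + m - 1) mod m)) = (\<Sum>i<m. (f i :: real))"
proof -
  obtain k where m: "m = Suc k" using assms by (cases m) auto
  have "(\<Sum>i<Suc k. f ((i + Suc k - 1) mod Suc k)) = f k + (\<Sum>i<k. f ((Suc i + Suc k - 1) mod Suc k))"
    by (subst sum.lessThan_Suc_shift) simp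
  also have "(\<Sum>i<k. f ((Suc i + Suc k - 1) mod Suc k)) = (\<Sum>i<k. f i)"
  proof (rule sum.cong)
    fix i assume "i \<in> {..<k}"
    then have "(Suc i + Suc k - 1) mod Suc k = i"
      by (simp add: mod_if)
    then show "f ((Suc i + Suc k - 1) mod Suc k) = f i" by simp
  qed simp
  finally show ?thesis using m by simp
qed

theorem proposition4p5:
  fixes S :: "'a set" and R :: "'a word set" and F :: "'f set" and n :: "'f \<Rightarrow> nat"
    and glue :: "'f \<times> nat \<Rightarrow> (('f \<times> nat) \<times> bool) option"
    and lab :: "'f \<times> nat \<Rightarrow> 'a word" and P :: 'f
  assumes "vk_diagram S R F n glue lab"
    and "P \<in> F"
  shows "- kappa n glue P \<ge> (real (beta F n glue P) - 6) / 6"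
proof -
  note vk = assms(1)
  define m where "m = n P"
  have m1: "1 \<le> m" using vk assms(2) unfolding vk_diagram_def m_def by blast
  define a where "a i = 1 / real (eps glue (P, i))" for i
  define pv where "pv i = (i + m - 1) mod m" for i
  have a_ge: "a i \<ge> 1/2" for i by (simp add: a_def eps_def)
  have a_none: "glue (P, i) = None \<Longrightarrow> a i = 1" for i by (simp add: a_def eps_def)
  have sidei: "(P, i) \<in> sides F n" if "i < m" for i
    using that assms(2) by (simp add: sides_def m_def)
  have prvi: "prv n (P, i) = (P, pv i)" for i by (simp add: prv_def pv_def m_def)
  have key: "1 / real (degp n glue (P, i)) \<le> (a (pv i) + a i) / 2 - 1/6" if "i < m" for i
  proof -
    define d where "d = degp n glue (P, i)"
    have d1: "d \<noteq> 1" using corner_card(1)[OF vk sidei[OF that]] by (simp add: d_def degp_def)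
    have d2: "d = 2 \<Longrightarrow> glue (P, i) = None \<or> glue (P, pv i) = None"
      using corner_card(2)[OF vk sidei[OF that]] prvi by (simp add: d_def degp_def)
    have "d = 0 \<or> d = 2 \<or> d \<ge> 3" using d1 by auto
    then have "1 / real d \<le> (a (pv i) + a i) / 2 - 1/6"
    proof (elim disjE)
      assume "d = 0" then show ?thesis using a_ge[of i] a_ge[of "pv i"] by simp
    next
      assume dd: "d = 2"
      then have "a i = 1 \<or> a (pv i) = 1" using d2 a_none by blast
      then show ?thesis using a_ge[of i] a_ge[of "pv i"] dd by (elim disjE) (simp_all add: field_simps)
    next
      assume "d \<ge> 3"
      then have "1 / real d \<le> 1/3" by (simp add: field_simps)
      moreover have "(a (pv i) + a i) / 2 - 1/6 \<ge> 1/3" using a_ge[of i] a_ge[of "pv i"] by argo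
      ultimately show ?thesis by linarith
    qed
    then show ?thesis by (simp add: d_def)
  qed
  have "(\<Sum>i<m. 1 / real (degp n glue (P, i))) \<le> (\<Sum>i<m. (a (pv i) + a i) / 2 - 1/6)"
    by (rule sum_mono) (use key in auto)
  also have "\<dots> = ((\<Sum>i<m. a (pv i)) + (\<Sum>i<m. a i)) / 2 - real m / 6"
    by (simp add: sum_subtractf sum.distrib sum_divide_distrib[symmetric])
  finally have ineq0: "(\<Sum>i<m. 1 / real (degp n glue (P, i))) \<le> ((\<Sum>i<m. a (pv i)) + (\<Sum>i<m. a i)) / 2 - real m / 6" .
  have sh: "(\<Sum>i<m. a (pv i)) = (\<Sum>i<m. a i)"
    unfolding pv_def by (rule sum_shift_prev[OF m1])
  have ineq: "(\<Sum>i<m. 1 / real (degp n glue (P, i))) \<le> (\<Sum>i<m. a i) - real m / 6"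
    using ineq0 unfolding sh by simp
  have "beta F n glue P = m"
  proof -
    have "beta_v F n glue (P, i) = 1" if "i < m" for i
    proof -
      have "3 \<le> deg F n glue (P, i)" using vk sidei[OF that] unfolding vk_diagram_def by blast
      then show ?thesis by (simp add: beta_v_def)
    qed
    then show ?thesis unfolding beta_def m_def[symmetric] by simp
  qed
  moreover have "kappa n glue P = (\<Sum>i<m. 1 / real (degp n glue (P, i))) - (\<Sum>i<m. a i) + 1"
    unfolding kappa_def a_def m_def by simp
  ultimately show ?thesis using ineq by (simp add: field_simps)
qed

end
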